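(* Let $2\leq k<d$, $A\subset\mathbb{R}^d$, $0<r<\operatorname{reach}A$, $\theta>0$, and let $a,b\in T_k(A)$ be $(A,k,\theta)$-related. Then $$\rho_k(\psi_k^A(a),\psi_k^A(b))\leq L_{k,\theta,r}|b-a|,\qquad L_{k,\theta,r}=\frac{k}{(k!\,\theta)^2r}.$$
   Context: $\operatorname{reach}A=\inf_{a\in A}\sup\{r\geq0:$ every point of $B(a,r)$ has a unique nearest point in $A\}$. $\operatorname{Tan}(A,x)$ is the tangent cone ($u\in\operatorname{Tan}(A,x)$ iff $u=0$ or $r_i(x_i-x)\to u$ for some $x\neq x_i\in A$, $x_i\to x$, $r_i>0$), $\widetilde{\operatorname{Tan}}(A,x)=\operatorname{span}\operatorname{Tan}(A,x)$, $T_k(A)=\{x\in A:\dim\widetilde{\operatorname{Tan}}(A,x)=k\}$, $\psi_k^A(x)=\widetilde{\operatorname{Tan}}(A,x)\in G(d,k)$, and $\rho_k(U,V)=\max\big(\sup_{u\in U,|u|=1}\mathrm{dist}(u,V),\sup_{v\in V,|v|=1}\mathrm{dist}(v,U)\big)$. For $a_0,\dots,a_k\in\mathbb{R}^d$, $\sigma(a_0,\dots,a_k)=\operatorname{conv}\{a_0,\dots,a_k\}$, $|\sigma|$ is its $k$-dimensional volume and (if $\operatorname{diam}\sigma>0$) $\Theta(\sigma)=|\sigma|/(\operatorname{diam}\sigma)^k$ is its fullness. Points $a\neq b$ in $\mathbb{R}^d$ are $(A,k,\theta)$-related if there exist $z_1,\dots,z_{k-1}\in A$ with $\Theta(\sigma(a,b,z_1,\dots,z_{k-1}))\geq\theta$.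 *)

theory Defs
  imports "HOL-Analysis.Analysis"
begin

text \<open>Nearest point uniqueness and reach (as an extended real; reach of the empty set is +infinity).\<close>
definition unique_nearest :: "'a::euclidean_space set \<Rightarrow> 'a \<Rightarrow> bool" where
  "unique_nearest A x \<longleftrightarrow> (\<exists>!p. p \<in> A \<and> (\<forall>q\<in>A. dist x p \<le> dist x q))"

definition reach :: "'a::euclidean_space set \<Rightarrow> ereal" where
  "reach A = (INF a\<in>A. Sup {ereal r | r. r \<ge> 0 \<and> (\<forall>x\<in>ball a r. unique_nearest A x)})"

definition Tan :: "'a::euclidean_space set \<Rightarrow> 'a \<Rightarrow> 'a set" where
  "Tan A x = {u. u = 0 \<or> (\<exists>xs rs. (\<forall>i. xs i \<in> A \<and> xs i \<noteq> x \<and> rs i > (0::real))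
        \<and> xs \<longlonglongrightarrow> x \<and> (\<lambda>i. rs i *\<^sub>R (xs i - x)) \<longlonglongrightarrow> u)}"

definition Tan_span :: "'a::euclidean_space set \<Rightarrow> 'a \<Rightarrow> 'a set" where
  "Tan_span A x = span (Tan A x)"

definition T_k :: "nat \<Rightarrow> 'a::euclidean_space set \<Rightarrow> 'a set" where
  "T_k k A = {x \<in> A. dim (Tan_span A x) = k}"

definition psi :: "nat \<Rightarrow> 'a::euclidean_space set \<Rightarrow> 'a \<Rightarrow> 'a set" where
  "psi k A x = Tan_span A x"

definition rho :: "'a::euclidean_space set \<Rightarrow> 'a set \<Rightarrow> real" where
  "rho U V = max (SUP u\<in>{u\<in>U. norm u = 1}. infdist u V) (SUP v\<in>{v\<in>V. norm v = 1}. infdist v U)"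

definition detk :: "nat \<Rightarrow> (nat \<Rightarrow> nat \<Rightarrow> real) \<Rightarrow> real" where
  "detk k M = (\<Sum>p | p permutes {..<k}. of_int (sign p) * (\<Prod>i<k. M i (p i)))"

text \<open>k-dimensional volume of the simplex with vertices P 0, ..., P k (Gram determinant formula).\<close>
definition simplex_vol :: "nat \<Rightarrow> (nat \<Rightarrow> 'a::euclidean_space) \<Rightarrow> real" where
  "simplex_vol k P = sqrt (detk k (\<lambda>i j. (P (Suc i) - P 0) \<bullet> (P (Suc j) - P 0))) / fact k"

definition simplex_set :: "nat \<Rightarrow> (nat \<Rightarrow> 'a::euclidean_space) \<Rightarrow> 'a set" where
  "simplex_set k P = convex hull (P ` {..k})"

definition fullness :: "nat \<Rightarrow> (nat \<Rightarrow> 'a::euclidean_space) \<Rightarrow> real" where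
  "fullness k P = simplex_vol k P / (diameter (simplex_set k P)) ^ k"

definition verts :: "'a \<Rightarrow> 'a \<Rightarrow> (nat \<Rightarrow> 'a) \<Rightarrow> nat \<Rightarrow> 'a" where
  "verts a b z i = (if i = 0 then a else if i = 1 then b else z (i - 1))"

definition related :: "'a::euclidean_space set \<Rightarrow> nat \<Rightarrow> real \<Rightarrow> 'a \<Rightarrow> 'a \<Rightarrow> bool" where
  "related A k \<theta> a b \<longleftrightarrow> a \<noteq> b \<and>
     (\<exists>z. (\<forall>i\<in>{1..k-1}. z i \<in> A) \<and> fullness k (verts a b z) \<ge> \<theta>)"

end

theory Submission
  imports Defs "Jordan_Normal_Form.Determinant"
begin

lemma infdist_glb:
  assumes "A \<noteq> {}" "\<And>a. a \<in> A \<Longrightarrow> d \<le> dist x a"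
  shows "d \<le> infdist x A"
  using assms by (simp add: infdist_notempty cINF_greatest)

lemma norm_diff_sq: "(norm (a - b))^2 = (norm a)^2 - 2 * inner a b + (norm (b::'a::real_inner))^2"
  by (simp add: power2_norm_eq_inner inner_diff_left inner_diff_right inner_commute)

lemma decomp_span:
  fixes x :: "'a::euclidean_space"
  obtains y z where "y \<in> span S" "\<And>w. w \<in> span S \<Longrightarrow> inner z w = 0" "x = y + z"
    "infdist x (span S) = norm z"
proof -
  obtain y z where y: "y \<in> span S" and z: "\<And>w. w \<in> span S \<Longrightarrow> Linear_Algebra.orthogonal z w" and xyz: "x = y + z"
    using orthogonal_subspace_decomp_exists by blast
  have zw: "inner z w = 0" if "w \<in> span S" for w using z[OF that] by (simp add: Linear_Algebra.orthogonal_def)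
  have "infdist x (span S) = norm z"
  proof (rule antisym)
    show "infdist x (span S) \<le> norm z" using infdist_le[OF y, of x] xyz by (simp add: dist_norm)
    show "norm z \<le> infdist x (span S)"
    proof (rule infdist_glb)
      show "span S \<noteq> {}" using span_zero by blast
      fix w assume w: "w \<in> span S"
      have yw: "y - w \<in> span S" using y w by (simp add: span_diff)
      have "(norm z)^2 \<le> (norm z)^2 + (norm (y - w))^2" by simp
      also have "\<dots> = (norm (z + (y - w)))^2"
        using zw[OF yw] by (simp add: norm_add_Pythagorean Linear_Algebra.orthogonal_def)
      finally have "(norm z)^2 \<le> (norm (x - w))^2" using xyz by (simp add: algebra_simps)
      thus "norm z \<le> dist x w" by (simp add: dist_norm power_mono_iff)
    qed
  qed
  thus ?thesis using that y zw xyz by blast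
qed

lemma detk_eq: "detk k M = Determinant.det (Matrix.mat k k (\<lambda>(i,j). M i j))"
  unfolding detk_def Determinant.det_def by (auto simp: atLeast0LessThan)

definition gram :: "nat \<Rightarrow> (nat \<Rightarrow> 'a::euclidean_space) \<Rightarrow> real Matrix.mat" where
  "gram k v = Matrix.mat k k (\<lambda>(i,j). inner (v i) (v j))"

definition gdet :: "nat \<Rightarrow> (nat \<Rightarrow> 'a::euclidean_space) \<Rightarrow> real" where
  "gdet k v = Determinant.det (gram k v)"

lemma gram_carrier[simp]: "gram k v \<in> carrier_mat k k"
  unfolding gram_def by auto

lemma gram_lin:
  fixes v w :: "nat \<Rightarrow> 'a::euclidean_space"
  assumes M: "M \<in> carrier_mat k k"
    and w: "\<And>i. i < k \<Longrightarrow> w i = (\<Sum>j<k. (M $$ (i,j)) *\<^sub>R v j)"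
  shows "gdet k w = (Determinant.det M)^2 * gdet k v"
proof -
  have eq: "gram k w = M * gram k v * transpose_mat M"
  proof (rule eq_matI)
    fix i l assume i: "i < dim_row (M * gram k v * transpose_mat M)" and l: "l < dim_col (M * gram k v * transpose_mat M)"
    hence ik: "i < k" and lk: "l < k" using M by auto
    have "(M * gram k v * transpose_mat M) $$ (i,l) = (\<Sum>m<k. (\<Sum>j<k. M $$ (i,j) * inner (v j) (v m)) * M $$ (l,m))"
      using M ik lk by (simp add: scalar_prod_def gram_def atLeast0LessThan)
    also have "\<dots> = inner (\<Sum>j<k. (M $$ (i,j)) *\<^sub>R v j) (\<Sum>m<k. (M $$ (l,m)) *\<^sub>R v m)"
      by (simp add: inner_sum_left inner_sum_right sum_distrib_left sum_distrib_right mult_ac)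
    also have "\<dots> = gram k w $$ (i,l)" using ik lk by (simp add: gram_def w)
    finally show "gram k w $$ (i, l) = (M * gram k v * transpose_mat M) $$ (i, l)" by simp
  qed (use M in \<open>auto simp: gram_def\<close>)
  have "Determinant.det (M * gram k v * transpose_mat M) = Determinant.det M * gdet k v * Determinant.det M"
    using M by (simp add: det_mult[of _ k] det_transpose gdet_def)
  thus ?thesis using eq by (simp add: gdet_def power2_eq_square)
qed

lemma span_rep:
  fixes v :: "nat \<Rightarrow> 'a::euclidean_space"
  assumes "finite I" "y \<in> span (v ` I)"
  shows "\<exists>c. y = (\<Sum>j\<in>I. c j *\<^sub>R v j)"
  using assms
proof (induction I arbitrary: y rule: finite_induct)
  case empty thus ?case by simp
next
  case (insert i I)
  from insert.prems obtain t where "y - t *\<^sub>R v i \<in> span (v ` I)"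
    using span_breakdown_eq by (metis image_insert)
  then obtain c where c: "y - t *\<^sub>R v i = (\<Sum>j\<in>I. c j *\<^sub>R v j)" using insert.IH by blast
  define c' where "c' = c(i := t)"
  have "(\<Sum>j\<in>I. c' j *\<^sub>R v j) = (\<Sum>j\<in>I. c j *\<^sub>R v j)"
    using insert.hyps by (intro sum.cong) (auto simp: c'_def)
  hence "y = (\<Sum>j\<in>insert i I. c' j *\<^sub>R v j)"
    using insert.hyps c by (simp add: c'_def algebra_simps)
  thus ?case by blast
qed

lemma gram_perm:
  fixes v :: "nat \<Rightarrow> 'a::euclidean_space"
  assumes p: "p permutes {..<k}"
  shows "gdet k (v \<circ> p) = gdet k v"
proof -
  define M where "M = Matrix.mat k k (\<lambda>(i,j). if p i = j then (1::real) else 0)"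
  have M: "M \<in> carrier_mat k k" by (simp add: M_def)
  have pk: "p i < k" if "i < k" for i using p that by (meson lessThan_iff permutes_in_image)
  have w: "(v \<circ> p) i = (\<Sum>j<k. (M $$ (i,j)) *\<^sub>R v j)" if i: "i < k" for i
  proof -
    have "(\<Sum>j<k. (M $$ (i,j)) *\<^sub>R v j) = (\<Sum>j<k. (if p i = j then v j else 0))"
      using i by (intro sum.cong) (auto simp: M_def)
    also have "\<dots> = v (p i)" using pk[OF i] by (simp add: sum.delta)
    finally show ?thesis by simp
  qed
  have MM: "M * transpose_mat M = 1\<^sub>m k"
  proof (rule eq_matI)
    fix i l assume "i < dim_row (1\<^sub>m k)" "l < dim_col (1\<^sub>m k)"
    hence ik: "i < k" and lk: "l < k" by auto
    have "(M * transpose_mat M) $$ (i,l) = (\<Sum>j<k. (if p i = j then 1 else 0) * (if p l = j then 1 else 0))"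
      using ik lk M by (simp add: scalar_prod_def M_def atLeast0LessThan)
    also have "\<dots> = (\<Sum>j<k. (if p i = j then (if p l = j then 1 else 0) else 0))"
      by (intro sum.cong) auto
    also have "\<dots> = (if p l = p i then 1 else 0)" using pk[OF ik] by (simp add: sum.delta)
    also have "\<dots> = (if i = l then 1 else 0)" using p by (metis permutes_inj injD)
    finally show "(M * transpose_mat M) $$ (i,l) = 1\<^sub>m k $$ (i,l)" using ik lk by simp
  qed (use M in auto)
  have "Determinant.det M * Determinant.det M = 1"
    using arg_cong[OF MM, of Determinant.det] M by (simp add: det_mult[of _ k] det_transpose)
  thus ?thesis using gram_lin[OF M w] by (simp add: power2_eq_square comp_def)
qed

lemma gram_last:
  fixes v :: "nat \<Rightarrow> 'a::euclidean_space"
  shows "gdet (Suc m) v = gdet m v * (infdist (v m) (span (v ` {..<m})))^2"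
proof -
  obtain y z where y: "y \<in> span (v ` {..<m})" and z: "\<And>u. u \<in> span (v ` {..<m}) \<Longrightarrow> inner z u = 0"
    and yz: "v m = y + z" and inf: "infdist (v m) (span (v ` {..<m})) = norm z"
    by (rule decomp_span[of "v ` {..<m}" "v m"]) blast
  obtain c where c: "y = (\<Sum>j<m. c j *\<^sub>R v j)" using span_rep[OF _ y] by auto
  define w where "w = v(m := z)"
  define M where "M = Matrix.mat (Suc m) (Suc m) (\<lambda>(i,j). if i = m then (if j = m then 1 else if j < m then - c j else 0)
     else (if i = j then (1::real) else 0))"
  have M: "M \<in> carrier_mat (Suc m) (Suc m)" by (simp add: M_def)
  have w: "w i = (\<Sum>j<Suc m. (M $$ (i,j)) *\<^sub>R v j)" if i: "i < Suc m" for i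
  proof (cases "i = m")
    case True
    have "(\<Sum>j<Suc m. (M $$ (i,j)) *\<^sub>R v j) = (\<Sum>j<m. (- c j) *\<^sub>R v j) + v m"
      using True by (simp add: M_def)
    also have "\<dots> = v m - y" by (simp add: c sum_negf)
    finally show ?thesis using True yz by (simp add: w_def)
  next
    case False
    hence im: "i < m" using i by simp
    have "(\<Sum>j<Suc m. (M $$ (i,j)) *\<^sub>R v j) = (\<Sum>j<Suc m. (if i = j then v j else 0))"
      using im by (intro sum.cong) (auto simp: M_def)
    also have "\<dots> = v i" using i by (simp add: sum.delta)
    finally show ?thesis using False by (simp add: w_def)
  qed
  have dM: "Determinant.det M = 1"
  proof -
    have "Determinant.det M = prod_list (diag_mat M)"
      by (rule det_lower_triangular[OF _ M]) (auto simp: M_def)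
    also have "\<dots> = (\<Prod>i = 0..<Suc m. M $$ (i,i))" by (simp add: prod_list_diag_prod M_def)
    also have "\<dots> = 1" by (intro prod.neutral) (auto simp: M_def)
    finally show ?thesis .
  qed
  have e1: "gdet (Suc m) v = gdet (Suc m) w" using gram_lin[OF M w] dM by simp
  have vj: "v j \<in> span (v ` {..<m})" if "j < m" for j using that by (simp add: span_base)
  have "gdet (Suc m) w = (\<Sum>j<Suc m. gram (Suc m) w $$ (m,j) * cofactor (gram (Suc m) w) m j)"
    unfolding gdet_def by (rule laplace_expansion_row) auto
  also have "\<dots> = gram (Suc m) w $$ (m,m) * cofactor (gram (Suc m) w) m m"
  proof -
    have "gram (Suc m) w $$ (m,j) = 0" if "j < m" for j
      using that z[OF vj[OF that]] by (simp add: gram_def w_def)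
    thus ?thesis by (simp add: lessThan_Suc)
  qed
  also have "cofactor (gram (Suc m) w) m m = gdet m v"
  proof -
    have "mat_delete (gram (Suc m) w) m m = gram m v"
      by (rule eq_matI) (auto simp: mat_delete_def gram_def w_def)
    thus ?thesis by (simp add: cofactor_def gdet_def)
  qed
  also have "gram (Suc m) w $$ (m,m) = (norm z)^2" by (simp add: gram_def w_def power2_norm_eq_inner)
  finally show ?thesis using e1 inf by simp
qed

lemma gram_hadamard:
  fixes v :: "nat \<Rightarrow> 'a::euclidean_space"
  shows "0 \<le> gdet k v \<and> gdet k v \<le> (\<Prod>j<k. (norm (v j))^2)"
proof (induction k)
  case 0 thus ?case by (simp add: gdet_def gram_def)
next
  case (Suc m)
  have i0: "0 \<le> infdist (v m) (span (v ` {..<m}))" by (rule infdist_nonneg)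
  have i1: "infdist (v m) (span (v ` {..<m})) \<le> norm (v m)"
    using infdist_le[OF span_zero, of "v m" "v ` {..<m}"] by simp
  have sq: "(infdist (v m) (span (v ` {..<m})))^2 \<le> (norm (v m))^2" using i0 i1 by (simp add: power_mono)
  have "gdet m v * (infdist (v m) (span (v ` {..<m})))^2 \<le> (\<Prod>j<m. (norm (v j))^2) * (norm (v m))^2"
    using Suc.IH sq by (intro mult_mono) auto
  thus ?case using Suc.IH unfolding gram_last
    by (auto simp: lessThan_Suc mult.commute)
qed

lemma gram_alt:
  fixes v :: "nat \<Rightarrow> 'a::euclidean_space"
  assumes i: "i < Suc m" and D: "\<And>j. j < Suc m \<Longrightarrow> norm (v j) \<le> D"
  shows "gdet (Suc m) v \<le> (infdist (v i) (span (v ` ({..<Suc m} - {i}))))^2 * (D^2)^m"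
proof -
  define p where "p = Transposition.transpose i m"
  have p: "p permutes {..<Suc m}" unfolding p_def using i by (intro permutes_swap_id) auto
  have img: "p ` {..<m} = {..<Suc m} - {i}"
  proof -
    have "p ` ({..<Suc m} - {m}) = p ` {..<Suc m} - {p m}"
      by (simp add: image_set_diff permutes_inj[OF p])
    also have "\<dots> = {..<Suc m} - {i}" using p by (simp add: permutes_image p_def)
    finally show ?thesis by (simp add: lessThan_Suc)
  qed
  have "gdet (Suc m) v = gdet (Suc m) (v \<circ> p)" by (rule gram_perm[OF p, symmetric])
  also have "\<dots> = gdet m (v \<circ> p) * (infdist (v i) (span (v ` ({..<Suc m} - {i}))))^2"
  proof -
    have "(v \<circ> p) ` {..<m} = v ` ({..<Suc m} - {i})" by (metis image_comp img)
    moreover have "(v \<circ> p) m = v i" by (simp add: p_def)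
    ultimately show ?thesis unfolding gram_last by simp
  qed
  also have "\<dots> \<le> (D^2)^m * (infdist (v i) (span (v ` ({..<Suc m} - {i}))))^2"
  proof (rule mult_right_mono)
    have pm: "p j < Suc m" if "j < m" for j using p that by (meson lessThan_iff less_SucI permutes_in_image)
    have "gdet m (v \<circ> p) \<le> (\<Prod>j<m. (norm ((v \<circ> p) j))^2)" using gram_hadamard by blast
    also have "\<dots> \<le> (\<Prod>j<m. D^2)"
      by (intro prod_mono) (auto intro!: power_mono D pm)
    finally show "gdet m (v \<circ> p) \<le> (D^2)^m" by simp
  qed simp
  finally show ?thesis by (simp add: mult.commute)
qed

lemma detk_gdet: "detk k (\<lambda>i j. inner (v i) (v j)) = gdet k v"
  unfolding detk_eq gdet_def gram_def by simp

lemma gram_base: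
  fixes a b :: "'a::euclidean_space"
  shows "gdet k (\<lambda>i. verts b a z (Suc i) - verts b a z 0) = gdet k (\<lambda>i. verts a b z (Suc i) - verts a b z 0)"
proof -
  define v where "v = (\<lambda>i. verts a b z (Suc i) - verts a b z 0)"
  define M where "M = Matrix.mat k k (\<lambda>(i,j). if i = 0 then (if j = 0 then -1 else 0)
     else (if j = 0 then -1 else if i = j then (1::real) else 0))"
  have M: "M \<in> carrier_mat k k" by (simp add: M_def)
  have w: "verts b a z (Suc i) - verts b a z 0 = (\<Sum>j<k. (M $$ (i,j)) *\<^sub>R v j)" if i: "i < k" for i
  proof (cases "i = 0")
    case True
    have "(\<Sum>j<k. (M $$ (i,j)) *\<^sub>R v j) = (\<Sum>j<k. (if j = 0 then - v 0 else 0))"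
      using True i by (intro sum.cong) (auto simp: M_def)
    also have "\<dots> = - v 0" using i by (simp add: sum.delta)
    finally show ?thesis using True by (simp add: v_def verts_def)
  next
    case False
    have "(\<Sum>j<k. (M $$ (i,j)) *\<^sub>R v j) = (\<Sum>j<k. (if j = 0 then - v 0 else 0) + (if j = i then v j else 0))"
      using False i by (intro sum.cong) (auto simp: M_def)
    also have "\<dots> = - v 0 + v i" using i False by (simp add: sum.distrib sum.delta)
    finally show ?thesis using False by (simp add: v_def verts_def)
  qed
  have dM: "(Determinant.det M)^2 = 1"
  proof -
    have "Determinant.det M = prod_list (diag_mat M)"
      by (rule det_lower_triangular[OF _ M]) (auto simp: M_def)
    also have "\<dots> = (\<Prod>i = 0..<k. M $$ (i,i))" by (simp add: prod_list_diag_prod M_def)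
    also have "\<dots> = (\<Prod>i = 0..<k. (if i = 0 then -1 else 1))" by (intro prod.cong) (auto simp: M_def)
    finally show ?thesis by (simp add: prod.If_cases power2_eq_square)
  qed
  show ?thesis using gram_lin[OF M w] dM by (simp add: v_def)
qed


lemma infdist_proj:
  fixes x y :: "'a::euclidean_space"
  assumes V: "subspace V" and y: "y \<in> V" and orth: "\<And>w. w \<in> V \<Longrightarrow> inner (x - y) w = 0"
  shows "infdist x V = norm (x - y)"
proof (rule antisym)
  show "infdist x V \<le> norm (x - y)" using infdist_le[OF y, of x] by (simp add: dist_norm)
  show "norm (x - y) \<le> infdist x V"
  proof (rule infdist_glb)
    show "V \<noteq> {}" using y by blast
    fix w assume w: "w \<in> V"
    have yw: "y - w \<in> V" using y w V by (simp add: subspace_diff)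
    have "(norm (x - y))^2 \<le> (norm (x - y))^2 + (norm (y - w))^2" by simp
    also have "\<dots> = (norm (x - w))^2"
      using norm_add_Pythagorean[of "x - y" "y - w"] orth[OF yw] by (simp add: Linear_Algebra.orthogonal_def)
    finally have "(norm (x - y))^2 \<le> (norm (x - w))^2" .
    thus "norm (x - y) \<le> dist x w" by (simp add: dist_norm power_mono_iff)
  qed
qed

lemma proj_exists:
  fixes V :: "'a::euclidean_space set"
  assumes V: "subspace V"
  obtains \<pi> where "linear \<pi>" "\<And>x. \<pi> x \<in> V" "\<And>x w. w \<in> V \<Longrightarrow> inner (x - \<pi> x) w = 0"
proof -
  obtain B where BV: "B \<subseteq> V" and orth: "pairwise Linear_Algebra.orthogonal B" and nB: "\<And>x. x \<in> B \<Longrightarrow> norm x = 1"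
    and indB: "independent B" and spB: "span B = V"
    using orthonormal_basis_subspace[OF V] by metis
  have fB: "finite B" using indB by (rule independent_imp_finite)
  define \<pi> where "\<pi> = (\<lambda>x. \<Sum>b\<in>B. inner x b *\<^sub>R b)"
  have lin: "linear \<pi>" unfolding \<pi>_def
    by (intro linearI) (auto simp: inner_add_left scaleR_add_left sum.distrib scaleR_sum_right inner_scaleR_left)
  have inV: "\<pi> x \<in> V" for x
    unfolding \<pi>_def using BV V by (intro subspace_sum subspace_mul) auto
  have ob: "inner (x - \<pi> x) b = 0" if b: "b \<in> B" for x b
  proof -
    have "inner (\<pi> x) b = (\<Sum>b'\<in>B. inner x b' * inner b' b)" by (simp add: \<pi>_def inner_sum_left)
    also have "\<dots> = (\<Sum>b'\<in>B. if b' = b then inner x b else 0)"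
    proof (intro sum.cong refl)
      fix b' assume b': "b' \<in> B"
      show "inner x b' * inner b' b = (if b' = b then inner x b else 0)"
      proof (cases "b' = b")
        case True thus ?thesis using nB[OF b] by (simp add: power2_norm_eq_inner[symmetric])
      next
        case False thus ?thesis using orth b b' by (simp add: pairwise_def Linear_Algebra.orthogonal_def)
      qed
    qed
    also have "\<dots> = inner x b" using fB b by simp
    finally show ?thesis by (simp add: inner_diff_left)
  qed
  have "inner (x - \<pi> x) w = 0" if w: "w \<in> V" for x w
  proof -
    have "Linear_Algebra.orthogonal (x - \<pi> x) w"
      by (rule orthogonal_to_span[of w B]) (use w spB ob in \<open>auto simp: Linear_Algebra.orthogonal_def\<close>)
    thus ?thesis by (simp add: Linear_Algebra.orthogonal_def)
  qed
  thus ?thesis using that lin inV by blast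
qed

lemma sym_dist:
  fixes U V :: "'a::euclidean_space set"
  assumes sU: "subspace U" and sV: "subspace V" and dim: "dim V \<le> dim U"
    and \<delta>: "0 \<le> \<delta>" "\<delta> < 1" and h: "\<And>u. u \<in> U \<Longrightarrow> infdist u V \<le> \<delta> * norm u"
    and v: "v \<in> V"
  shows "infdist v U \<le> \<delta> * norm v"
proof -
  obtain \<pi> where lin: "linear \<pi>" and inV: "\<And>x. \<pi> x \<in> V" and orth: "\<And>x w. w \<in> V \<Longrightarrow> inner (x - \<pi> x) w = 0"
    using proj_exists[OF sV] by blast
  have idist: "infdist x V = norm (x - \<pi> x)" for x by (rule infdist_proj[OF sV inV orth])
  have inj: "inj_on \<pi> U"
  proof -
    have "x = 0" if "x \<in> U" "\<pi> x = 0" for x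
    proof -
      have "norm x \<le> \<delta> * norm x" using h[OF that(1)] idist[of x] that(2) by simp
      thus ?thesis using \<delta> by (metis mult_le_cancel_right1 norm_ge_zero norm_le_zero_iff not_le)
    qed
    thus ?thesis using linear_inj_on_iff_eq_0[OF lin sU] by blast
  qed
  have "\<pi> ` U = V"
  proof (rule subspace_dim_equal)
    show "subspace (\<pi> ` U)" by (rule linear_subspace_image[OF lin sU])
    show "subspace V" by (rule sV)
    show "\<pi> ` U \<subseteq> V" using inV by blast
    have spU: "span U = U" using sU by (simp add: span_eq_iff)
    have "dim (\<pi> ` U) = dim U" using dim_image_eq[OF lin, of U] inj unfolding spU by blast
    thus "dim V \<le> dim (\<pi> ` U)" using dim by simp
  qed
  then obtain u where u: "u \<in> U" and vu: "v = \<pi> u" using v by blast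
  show ?thesis
  proof (cases "v = 0")
    case True thus ?thesis using sU by (simp add: subspace_0)
  next
    case False
    have uv: "inner (u - v) v = 0" using orth[OF v, of u] vu by simp
    have un: "u \<noteq> 0" using False vu lin by (auto simp: linear_0)
    have nu: "norm u > 0" using un by simp
    have p1: "(norm u)^2 = (norm v)^2 + (norm (u - v))^2"
    proof -
      have "(norm (v + (u - v)))^2 = (norm v)^2 + (norm (u - v))^2"
        using norm_add_Pythagorean[of v "u - v"] uv by (simp add: Linear_Algebra.orthogonal_def inner_commute)

      thus ?thesis by simp
    qed
    have uvd: "norm (u - v) \<le> \<delta> * norm u" using h[OF u] idist[of u] vu by simp
    have "(norm (u - v))^2 \<le> (\<delta> * norm u)^2" using uvd by (simp add: power_mono)
    hence lb: "(1 - \<delta>^2) * (norm u)^2 \<le> (norm v)^2" using p1 by (simp add: power_mult_distrib algebra_simps)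
    have iuv: "inner u v = (norm v)^2" using uv by (simp add: inner_diff_left power2_norm_eq_inner)
    define \<alpha> where "\<alpha> = (norm v)^2 / (norm u)^2"
    have "\<alpha> *\<^sub>R u \<in> U" using u sU by (simp add: subspace_mul)
    hence "infdist v U \<le> norm (v - \<alpha> *\<^sub>R u)" using infdist_le[of "\<alpha> *\<^sub>R u" U v] by (simp add: dist_norm)
    moreover have "(norm (v - \<alpha> *\<^sub>R u))^2 \<le> (\<delta> * norm v)^2"
    proof -
      have "(norm (v - \<alpha> *\<^sub>R u))^2 = (norm v)^2 - 2 * \<alpha> * inner v u + \<alpha>^2 * (norm u)^2"
        unfolding norm_diff_sq by (simp add: power_mult_distrib)
      also have "\<dots> = (norm v)^2 - (norm v)^2 * ((norm v)^2 / (norm u)^2)"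
        using nu iuv by (simp add: \<alpha>_def inner_commute field_simps power2_eq_square)
      also have "\<dots> \<le> (norm v)^2 - (norm v)^2 * (1 - \<delta>^2)"
      proof -
        have "1 - \<delta>^2 \<le> (norm v)^2 / (norm u)^2" using lb nu by (simp add: field_simps)
        hence "(norm v)^2 * (1 - \<delta>^2) \<le> (norm v)^2 * ((norm v)^2 / (norm u)^2)" by (rule mult_left_mono) simp
        thus ?thesis by linarith
      qed
      also have "\<dots> = (\<delta> * norm v)^2" by (simp add: power_mult_distrib algebra_simps)
      finally show ?thesis .
    qed
    hence "norm (v - \<alpha> *\<^sub>R u) \<le> \<delta> * norm v" using \<delta> by (simp add: power_mono_iff)
    ultimately show ?thesis by simp
  qed
qed


lemma not_tendsto_subseq:
  fixes X :: "nat \<Rightarrow> 'b::metric_space"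
  assumes "\<not> (X \<longlonglongrightarrow> L)"
  obtains e and \<phi> :: "nat \<Rightarrow> nat" where "e > 0" "strict_mono \<phi>" "\<And>j. e \<le> dist (X (\<phi> j)) L"
proof -
  from assms obtain e where e: "e > 0" and ne: "\<not> eventually (\<lambda>n. dist (X n) L < e) sequentially"
    unfolding tendsto_iff by blast
  have "frequently (\<lambda>n. \<not> dist (X n) L < e) sequentially" using ne by (simp add: not_eventually)
  hence "\<forall>N. \<exists>n\<ge>N. \<not> dist (X n) L < e" by (simp add: frequently_sequentially)
  hence "infinite {n. e \<le> dist (X n) L}" by (simp add: infinite_nat_iff_unbounded_le not_less)
  then obtain \<phi> :: "nat \<Rightarrow> nat" where "strict_mono \<phi>" "\<And>j. \<phi> j \<in> {n. e \<le> dist (X n) L}"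
    using infinite_enumerate by blast
  thus ?thesis by (intro that[OF e]) auto
qed


lemma norm_add_sq: "(norm (a + b))^2 = (norm a)^2 + 2 * inner a b + (norm (b::'a::real_inner))^2"
  by (simp add: power2_norm_eq_inner inner_add_left inner_add_right inner_commute)

locale prs =
  fixes A :: "'a::euclidean_space set" and R :: real
  assumes Rpos: "0 < R"
    and unp: "\<And>a x. a \<in> A \<Longrightarrow> dist a x < R \<Longrightarrow> unique_nearest A x"
begin

definition U where "U = {x. \<exists>a\<in>A. dist a x < R}"

definition xi where "xi x = (THE p. p \<in> A \<and> (\<forall>q\<in>A. dist x p \<le> dist x q))"

lemma U_I: "a \<in> A \<Longrightarrow> dist a x < R \<Longrightarrow> x \<in> U" unfolding U_def by blast

lemma open_U: "open U"
proof -
  have "U = (\<Union>a\<in>A. ball a R)" unfolding U_def by (auto simp: ball_def)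
  thus ?thesis by auto
qed

lemma xi_props:
  assumes "x \<in> U"
  shows "xi x \<in> A" "\<And>q. q \<in> A \<Longrightarrow> dist x (xi x) \<le> dist x q"
proof -
  from assms obtain a where "a \<in> A" "dist a x < R" unfolding U_def by blast
  hence u: "\<exists>!p. p \<in> A \<and> (\<forall>q\<in>A. dist x p \<le> dist x q)" using unp unfolding unique_nearest_def by blast
  have "xi x \<in> A \<and> (\<forall>q\<in>A. dist x (xi x) \<le> dist x q)" unfolding xi_def by (rule theI'[OF u])
  thus "xi x \<in> A" "\<And>q. q \<in> A \<Longrightarrow> dist x (xi x) \<le> dist x q" by auto
qed

lemma xi_unique:
  assumes "x \<in> U" "p \<in> A" "\<And>q. q \<in> A \<Longrightarrow> dist x p \<le> dist x q"
  shows "xi x = p"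
proof -
  from assms obtain a where "a \<in> A" "dist a x < R" unfolding U_def by blast
  hence u: "\<exists>!p. p \<in> A \<and> (\<forall>q\<in>A. dist x p \<le> dist x q)" using unp unfolding unique_nearest_def by blast
  show ?thesis unfolding xi_def using assms u by (intro the1_equality) auto
qed

lemma closedA: "closed A"
proof -
  have "c \<in> A" if c: "c \<in> closure A" for c
  proof -
    obtain a where a: "a \<in> A" "dist a c < R" using c Rpos closure_approachable by blast
    hence cU: "c \<in> U" by (rule U_I)
    have "dist c (xi c) < e" if "e > 0" for e
    proof -
      obtain q where "q \<in> A" "dist q c < e" using c \<open>e>0\<close> closure_approachable by blast
      thus ?thesis using xi_props(2)[OF cU, of q] by (simp add: dist_commute)
    qed
    hence "dist c (xi c) = 0" by (metis dist_not_less_zero not_less_iff_gr_or_eq)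
    thus ?thesis using xi_props(1)[OF cU] by simp
  qed
  thus ?thesis using closure_subset_eq by blast
qed

lemma xi_cont: "continuous_on U xi"
  unfolding continuous_on_sequentially
proof (intro allI ballI impI)
  fix y :: "nat \<Rightarrow> 'a" and y0 assume y0: "y0 \<in> U" and h: "(\<forall>n. y n \<in> U) \<and> y \<longlonglongrightarrow> y0"
  hence yU: "\<And>n. y n \<in> U" and ylim: "y \<longlonglongrightarrow> y0" by auto
  show "(xi \<circ> y) \<longlonglongrightarrow> xi y0"
  proof (rule ccontr)
    assume "\<not> (xi \<circ> y) \<longlonglongrightarrow> xi y0"
    then obtain e and \<phi> :: "nat \<Rightarrow> nat" where e: "e > 0" and \<phi>: "strict_mono \<phi>" and far: "\<And>j. e \<le> dist ((xi \<circ> y) (\<phi> j)) (xi y0)"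
      using not_tendsto_subseq by blast
    have "bounded (range y)" using ylim by (simp add: convergent_imp_bounded)
    then obtain B where B: "\<And>n. norm (y n) \<le> B" unfolding bounded_iff by blast
    have bd: "norm (xi (y n)) \<le> 2 * B + norm (xi y0)" for n
    proof -
      have "dist (y n) (xi (y n)) \<le> dist (y n) (xi y0)" using xi_props[OF yU[of n]] xi_props(1)[OF y0] by blast
      hence "norm (xi (y n) - y n) \<le> norm (y n - xi y0)" by (simp add: dist_norm norm_minus_commute)
      also have "\<dots> \<le> norm (y n) + norm (xi y0)" by (rule norm_triangle_ineq4)
      finally have "norm (xi (y n) - y n) \<le> norm (y n) + norm (xi y0)" .
      moreover have "norm (xi (y n)) \<le> norm (y n) + norm (xi (y n) - y n)" by (rule norm_triangle_sub)
      ultimately have "norm (xi (y n)) \<le> norm (y n) + (norm (y n) + norm (xi y0))" by linarith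
      thus ?thesis using B[of n] by linarith
    qed
    have "bounded (range (\<lambda>j. xi (y (\<phi> j))))" unfolding bounded_iff using bd by blast
    then obtain l \<psi> where \<psi>: "strict_mono \<psi>" and llim: "((\<lambda>j. xi (y (\<phi> j))) \<circ> \<psi>) \<longlonglongrightarrow> l"
      using bounded_imp_convergent_subsequence by blast
    define z where "z = (\<lambda>j. y (\<phi> (\<psi> j)))"
    have zlim: "z \<longlonglongrightarrow> y0" unfolding z_def using LIMSEQ_subseq_LIMSEQ[OF ylim strict_mono_o[OF \<phi> \<psi>]]
      by (simp add: comp_def)
    have xzlim: "(\<lambda>j. xi (z j)) \<longlonglongrightarrow> l" using llim by (simp add: z_def comp_def)
    have zU: "z j \<in> U" for j unfolding z_def by (rule yU)
    have lA: "l \<in> A" using closed_sequentially[OF closedA _ xzlim] xi_props(1)[OF zU] by blast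
    have "dist y0 l \<le> dist y0 q" if q: "q \<in> A" for q
    proof (rule LIMSEQ_le)
      show "(\<lambda>j. dist (z j) (xi (z j))) \<longlonglongrightarrow> dist y0 l" by (intro tendsto_dist zlim xzlim)
      show "(\<lambda>j. dist (z j) q) \<longlonglongrightarrow> dist y0 q" by (intro tendsto_dist zlim tendsto_const)
      show "\<exists>N. \<forall>n\<ge>N. dist (z n) (xi (z n)) \<le> dist (z n) q" using xi_props(2)[OF zU q] by blast
    qed
    hence "xi y0 = l" using xi_unique[OF y0 lA] by blast
    moreover have "e \<le> dist l (xi y0)"
    proof (rule LIMSEQ_le_const)
      show "(\<lambda>j. dist (xi (z j)) (xi y0)) \<longlonglongrightarrow> dist l (xi y0)" by (intro tendsto_dist xzlim tendsto_const)
      show "\<exists>N. \<forall>n\<ge>N. e \<le> dist (xi (z n)) (xi y0)" using far by (auto simp: z_def)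
    qed
    ultimately show False using e by simp
  qed
qed

lemma xi_dist_U: assumes "x \<in> U" shows "dist x (xi x) < R"
proof -
  from assms obtain a where "a \<in> A" "dist a x < R" unfolding U_def by blast
  thus ?thesis using xi_props(2)[OF assms] by (metis dist_commute le_less_trans)
qed

lemma xi_shrink:
  assumes x: "x \<in> U" and t: "0 \<le> t" "t \<le> 1"
  shows "xi (xi x + t *\<^sub>R (x - xi x)) = xi x"
proof -
  define p where "p = xi x"
  define y where "y = p + t *\<^sub>R (x - p)"
  have pA: "p \<in> A" using xi_props(1)[OF x] by (simp add: p_def)
  have dxp: "dist x p < R" using xi_dist_U[OF x] by (simp add: p_def)
  have dyp: "dist y p = t * norm (x - p)" using t by (simp add: y_def dist_norm)
  have dxy: "dist x y = (1 - t) * norm (x - p)"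
  proof -
    have "x - y = (1 - t) *\<^sub>R (x - p)" by (simp add: y_def algebra_simps)
    thus ?thesis using t by (simp add: dist_norm)
  qed
  have "dist p y \<le> dist x p" using dyp t by (simp add: dist_commute dist_norm mult_left_le_one_le norm_minus_commute)
  hence yU: "y \<in> U" using dxp pA by (intro U_I[of p]) auto
  have "dist y p \<le> dist y q" if q: "q \<in> A" for q
  proof -
    have "dist x p \<le> dist x q" using xi_props(2)[OF x q] by (simp add: p_def)
    also have "\<dots> \<le> dist x y + dist y q" by (rule dist_triangle)
    finally have "dist x p - dist x y \<le> dist y q" by simp
    moreover have "dist x p - dist x y = dist y p" using dyp dxy by (simp add: dist_norm algebra_simps)
    ultimately show ?thesis by simp
  qed
  hence "xi y = p" using xi_unique[OF yU pA] by blast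
  thus ?thesis by (simp add: y_def p_def)
qed

lemma xi_step:
  assumes pA: "p \<in> A" and nu: "norm \<nu> = 1" and s: "0 < s" "s < R" and h: "xi (p + s *\<^sub>R \<nu>) = p"
  shows "\<exists>\<tau>>s. \<tau> < R \<and> xi (p + \<tau> *\<^sub>R \<nu>) = p"
proof -
  define x1 where "x1 = p + s *\<^sub>R \<nu>"
  define \<rho> where "\<rho> = (R - s) / 4"
  define \<tau> where "\<tau> = s + min \<rho> (s * \<rho> / (2 * R))"
  define lam where "lam = \<tau> / s"
  define y0 where "y0 = p + \<tau> *\<^sub>R \<nu>"
  define G where "G = (\<lambda>y. lam *\<^sub>R x1 - (lam - 1) *\<^sub>R xi y)"
  have \<rho>: "\<rho> > 0" using s by (simp add: \<rho>_def)
  have R: "R > 0" using Rpos .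
  have \<tau>s: "\<tau> > s" using \<rho> s R by (simp add: \<tau>_def)
  have \<tau>1: "\<tau> \<le> s + \<rho>" by (simp add: \<tau>_def)
  have \<tau>2: "\<tau> - s \<le> s * \<rho> / (2 * R)" by (simp add: \<tau>_def)
  have lams: "lam * s = \<tau>" using s by (simp add: lam_def)
  have lam1: "lam \<ge> 1" using \<tau>s s by (simp add: lam_def)
  have lam2: "lam - 1 \<le> \<rho> / (2 * R)"
  proof -
    have "lam - 1 = (\<tau> - s) / s" using s by (simp add: lam_def field_simps)
    also have "\<dots> \<le> (s * \<rho> / (2 * R)) / s" using \<tau>2 s by (intro divide_right_mono) auto
    also have "\<dots> = \<rho> / (2 * R)" using s by simp
    finally show ?thesis .
  qed
  define K where "K = cball y0 \<rho>"
  have dpy0: "dist p y0 = \<tau>" using nu \<tau>s s by (simp add: y0_def dist_norm)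
  have KU: "y \<in> U" and Kd: "dist p y \<le> R" if y: "y \<in> K" for y
  proof -
    have "dist p y \<le> dist p y0 + dist y0 y" by (rule dist_triangle)
    also have "\<dots> \<le> \<tau> + \<rho>" using y dpy0 by (simp add: K_def)
    also have "\<dots> < R" using \<tau>1 s unfolding \<rho>_def by (simp add: field_simps)
    finally show "y \<in> U" "dist p y \<le> R" using U_I[OF pA] by auto
  qed
  have cont: "continuous_on K G"
    unfolding G_def using continuous_on_subset[OF xi_cont] KU by (intro continuous_intros) auto
  have maps: "G y \<in> K" if y: "y \<in> K" for y
  proof -
    have "y0 - G y = (lam - 1) *\<^sub>R (xi y - p)"
      unfolding G_def y0_def x1_def using lams[symmetric] by (simp add: algebra_simps)
    hence "dist y0 (G y) = (lam - 1) * norm (xi y - p)" using lam1 by (simp add: dist_norm)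
    also have "\<dots> \<le> (\<rho> / (2 * R)) * (2 * R)"
    proof (rule mult_mono)
      have "norm (xi y - p) \<le> dist y (xi y) + dist y p"
        by (metis dist_commute dist_norm dist_triangle)
      also have "\<dots> \<le> dist y p + dist y p" using xi_props(2)[OF KU[OF y] pA] by simp
      also have "\<dots> \<le> 2 * R" using Kd[OF y] by (simp add: dist_commute)
      finally show "norm (xi y - p) \<le> 2 * R" .
    qed (use lam2 \<rho> R in auto)
    also have "\<dots> = \<rho>" using R by simp
    finally show ?thesis by (simp add: K_def)
  qed
  obtain y where yK: "y \<in> K" and yfix: "G y = y"
    using brouwer[of K G] cont maps \<rho> by (auto simp: K_def)
  define q where "q = xi y"
  have yU: "y \<in> U" using KU[OF yK] .
  have yq: "y - q = lam *\<^sub>R (x1 - q)"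
  proof -
    have "y = lam *\<^sub>R x1 - (lam - 1) *\<^sub>R q" using yfix by (simp add: G_def q_def)
    thus ?thesis by (simp add: algebra_simps)
  qed
  have "q + (1 / lam) *\<^sub>R (y - q) = x1" using yq lam1 by simp
  hence "xi x1 = q" using xi_shrink[OF yU, of "1 / lam"] lam1 by (simp add: q_def)
  hence qp: "q = p" using h by (simp add: x1_def)
  have "y = y0"
  proof -
    have "y = p + lam *\<^sub>R (x1 - p)" using yq qp by (simp add: algebra_simps)
    also have "\<dots> = y0" using lams by (simp add: x1_def y0_def)
    finally show ?thesis .
  qed
  hence "xi (p + \<tau> *\<^sub>R \<nu>) = p" using qp by (simp add: q_def y0_def)
  moreover have "\<tau> < R" using \<tau>1 s unfolding \<rho>_def by (simp add: field_simps)
  ultimately show ?thesis using \<tau>s by blast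
qed

lemma xi_extend:
  assumes x: "x \<in> U" and p: "xi x = p" and xp: "x \<noteq> p" and s: "0 \<le> s" "s < R"
  shows "xi (p + (s / norm (x - p)) *\<^sub>R (x - p)) = p"
proof -
  define \<nu> where "\<nu> = (1 / norm (x - p)) *\<^sub>R (x - p)"
  define s0 where "s0 = norm (x - p)"
  have s0: "s0 > 0" using xp by (simp add: s0_def)
  have s0R: "s0 < R" using xi_dist_U[OF x] p by (simp add: s0_def dist_norm)
  have nu: "norm \<nu> = 1" using xp by (simp add: \<nu>_def)
  have pA: "p \<in> A" using xi_props(1)[OF x] p by simp
  have eq: "(s / norm (x - p)) *\<^sub>R (x - p) = s *\<^sub>R \<nu>" for s by (simp add: \<nu>_def)
  define S where "S = {t. 0 \<le> t \<and> t < R \<and> xi (p + t *\<^sub>R \<nu>) = p}"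
  have ptU: "p + t *\<^sub>R \<nu> \<in> U" if "0 \<le> t" "t < R" for t
    using that nu by (intro U_I[OF pA]) (simp add: dist_norm)
  have down: "t \<in> S" if t': "t' \<in> S" and t: "0 \<le> t" "t \<le> t'" for t t'
  proof (cases "t' = 0")
    case True thus ?thesis using t t' by (simp add: S_def)
  next
    case False
    hence t'p: "t' > 0" using t by simp
    have x'U: "p + t' *\<^sub>R \<nu> \<in> U" using t' ptU by (simp add: S_def)
    have xi': "xi (p + t' *\<^sub>R \<nu>) = p" using t' by (simp add: S_def)
    have "xi (p + (t / t') *\<^sub>R ((p + t' *\<^sub>R \<nu>) - p)) = p"
      using xi_shrink[OF x'U, of "t / t'"] t t'p xi' by simp
    hence "xi (p + t *\<^sub>R \<nu>) = p" using t'p by simp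
    thus ?thesis using t t' by (simp add: S_def)
  qed
  have s0S: "s0 \<in> S" using s0 s0R p by (simp add: S_def s0_def \<nu>_def xp)
  have "s \<in> S"
  proof (rule ccontr)
    assume sS: "s \<notin> S"
    have lt: "t < s" if "t \<in> S" for t using down[OF that s(1)] sS by force
    have ne: "S \<noteq> {}" using s0S by blast
    have bdd: "bdd_above S" using lt by (meson bdd_aboveI less_imp_le)
    define \<sigma> where "\<sigma> = Sup S"
    have \<sigma>s: "\<sigma> \<le> s" unfolding \<sigma>_def using ne lt by (meson cSup_least less_imp_le)
    have \<sigma>0: "s0 \<le> \<sigma>" unfolding \<sigma>_def using s0S bdd by (rule cSup_upper)
    have cont: "continuous_on {0..<R} (\<lambda>t. xi (p + t *\<^sub>R \<nu>))"
      by (rule continuous_on_compose2[OF xi_cont]) (auto intro!: continuous_intros ptU)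
    have "closedin (top_of_set {0..<R}) {t \<in> {0..<R}. xi (p + t *\<^sub>R \<nu>) = p}"
      by (rule continuous_closedin_preimage_constant[OF cont])
    moreover have "{t \<in> {0..<R}. xi (p + t *\<^sub>R \<nu>) = p} = S" by (auto simp: S_def)
    ultimately obtain T where T: "closed T" "S = {0..<R} \<inter> T" by (auto simp: closedin_closed)
    have "\<sigma> \<in> closure S" unfolding \<sigma>_def using ne bdd by (rule closure_contains_Sup)
    hence "\<sigma> \<in> T" using T closure_minimal by blast
    hence \<sigma>S: "\<sigma> \<in> S" using T \<sigma>s \<sigma>0 s0 s by auto
    have "\<exists>\<tau>>\<sigma>. \<tau> < R \<and> xi (p + \<tau> *\<^sub>R \<nu>) = p"
      by (rule xi_step[OF pA nu]) (use \<sigma>S s0 \<sigma>0 in \<open>auto simp: S_def\<close>)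
    then obtain \<tau> where "\<tau> > \<sigma>" "\<tau> < R" "xi (p + \<tau> *\<^sub>R \<nu>) = p" by blast
    hence "\<tau> \<in> S" using \<sigma>0 s0 by (simp add: S_def)
    hence "\<tau> \<le> \<sigma>" unfolding \<sigma>_def using bdd by (rule cSup_upper)
    thus False using \<open>\<tau> > \<sigma>\<close> by simp
  qed
  thus ?thesis by (simp add: S_def eq)
qed

lemma normal_ineq:
  assumes x: "x \<in> U" and p: "xi x = p" and r: "0 < r" "r < R" and w: "w \<in> A"
  shows "inner (w - p) (x - p) \<le> (norm (w - p))^2 * norm (x - p) / (2 * r)"
proof (cases "x = p")
  case True thus ?thesis by simp
next
  case False
  define \<nu> where "\<nu> = (1 / norm (x - p)) *\<^sub>R (x - p)"
  define z where "z = p + r *\<^sub>R \<nu>"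
  have np: "norm (x - p) > 0" using False by simp
  have z: "xi z = p" using xi_extend[OF x p False, of r] r by (simp add: z_def \<nu>_def)
  have pA: "p \<in> A" using xi_props(1)[OF x] p by simp
  have zU: "z \<in> U" using r np by (intro U_I[OF pA]) (simp add: z_def \<nu>_def dist_norm)
  have "dist z p \<le> dist z w" using xi_props(2)[OF zU w] z by simp
  moreover have "dist z p = norm (r *\<^sub>R \<nu>)" by (simp add: z_def dist_norm)
  moreover have "dist z w = norm ((p - w) + r *\<^sub>R \<nu>)" by (simp add: z_def dist_norm algebra_simps)
  ultimately have "(norm (r *\<^sub>R \<nu>))^2 \<le> (norm ((p - w) + r *\<^sub>R \<nu>))^2"
    by (simp add: power_mono)
  moreover have "(norm (a + b))^2 = (norm a)^2 + 2 * inner a b + (norm b)^2" for a b :: 'a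
    by (simp add: power2_norm_eq_inner inner_add_left inner_add_right inner_commute)
  ultimately have "(norm (r *\<^sub>R \<nu>))^2 \<le> (norm (p - w))^2 + 2 * inner (p - w) (r *\<^sub>R \<nu>) + (norm (r *\<^sub>R \<nu>))^2"
    by metis
  hence "0 \<le> (norm (p - w))^2 + 2 * r * inner (p - w) \<nu>" by simp
  hence "2 * r * inner (w - p) \<nu> \<le> (norm (w - p))^2"
    by (simp add: inner_diff_left norm_minus_commute algebra_simps)
  hence "inner (w - p) \<nu> \<le> (norm (w - p))^2 / (2 * r)" using r by (simp add: field_simps)
  hence "norm (x - p) * inner (w - p) \<nu> \<le> norm (x - p) * ((norm (w - p))^2 / (2 * r))"
    using np by (intro mult_left_mono) auto
  moreover have "norm (x - p) * inner (w - p) \<nu> = inner (w - p) (x - p)"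
    unfolding \<nu>_def inner_scaleR_right using np by simp
  ultimately show ?thesis by (simp add: mult.commute)
qed

lemma dual_unit:
  assumes aA: "a \<in> A" and m: "norm m = 1" and dual: "\<And>t. t \<in> Tan A a \<Longrightarrow> inner m t \<le> 0"
    and r: "0 < r" "r < R" and w: "w \<in> A"
  shows "inner (w - a) m \<le> (norm (w - a))^2 / (2 * r)"
proof -
  define s where "s = (\<lambda>j::nat. R / (real j + 2))"
  have s0: "s j > 0" for j using Rpos by (simp add: s_def)
  have sR: "s j < R" for j using Rpos by (simp add: s_def field_simps add_pos_nonneg)
  have slim: "s \<longlonglongrightarrow> 0"
  proof -
    have "filterlim (\<lambda>j. real j + 2) at_top sequentially"
      using filterlim_tendsto_add_at_top[OF tendsto_const filterlim_real_sequentially, of "2::real"]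
      by (simp add: add.commute)
    hence "(\<lambda>j. R / (real j + 2)) \<longlonglongrightarrow> 0"
      by (intro tendsto_divide_0[OF tendsto_const] filterlim_at_top_imp_at_infinity)
    thus ?thesis by (simp add: s_def)
  qed
  define x where "x = (\<lambda>j. a + s j *\<^sub>R m)"
  have xU: "x j \<in> U" for j using s0[of j] sR[of j] m by (intro U_I[OF aA]) (simp add: x_def dist_norm)
  define q where "q = (\<lambda>j. xi (x j))"
  define e where "e = (\<lambda>j. q j - a)"
  have qA: "q j \<in> A" for j using xi_props(1)[OF xU] by (simp add: q_def)
  have Fa: "norm (x j - q j) \<le> s j" for j
  proof -
    have "dist (x j) (q j) \<le> dist (x j) a" using xi_props(2)[OF xU aA] by (simp add: q_def)
    thus ?thesis using s0[of j] m by (simp add: dist_norm x_def)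
  qed
  have xq: "x j - q j = s j *\<^sub>R m - e j" for j by (simp add: x_def e_def)
  have Fb: "norm (e j) \<le> 2 * s j" for j
  proof -
    have "norm (e j) \<le> norm (s j *\<^sub>R m) + norm (s j *\<^sub>R m - e j)"
      by (metis add_diff_cancel_left' diff_add_cancel norm_triangle_ineq4 norm_minus_commute)
    thus ?thesis using Fa[of j] s0[of j] m xq[of j] by simp
  qed
  have Fc: "(norm (e j))^2 \<le> 2 * s j * inner m (e j)" for j
  proof -
    have "(norm (s j *\<^sub>R m - e j))^2 \<le> (s j)^2" using Fa[of j] xq[of j] by (simp add: power_mono)
    moreover have "(norm (s j *\<^sub>R m - e j))^2 = (s j)^2 - 2 * s j * inner m (e j) + (norm (e j))^2"
      unfolding norm_diff_sq using m by (simp add: power_mult_distrib)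
    ultimately show ?thesis by simp
  qed
  have elim: "e \<longlonglongrightarrow> 0"
    by (rule Lim_null_comparison[of _ "\<lambda>j. 2 * s j"]) (use Fb in \<open>auto intro: tendsto_mult_right_zero slim\<close>)
  have qlim: "q \<longlonglongrightarrow> a"
  proof -
    have "(\<lambda>j. a + e j) \<longlonglongrightarrow> a + 0" by (intro tendsto_add tendsto_const elim)
    thus ?thesis by (simp add: e_def)
  qed
  define d where "d = (\<lambda>j. (1 / s j) *\<^sub>R e j)"
  have dlim: "d \<longlonglongrightarrow> 0"
  proof (rule ccontr)
    assume "\<not> d \<longlonglongrightarrow> 0"
    then obtain \<epsilon> and \<phi> :: "nat \<Rightarrow> nat" where \<epsilon>: "\<epsilon> > 0" and \<phi>: "strict_mono \<phi>"
      and far: "\<And>j. \<epsilon> \<le> dist (d (\<phi> j)) 0" using not_tendsto_subseq by blast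
    have far': "\<epsilon> * s (\<phi> j) \<le> norm (e (\<phi> j))" for j
      using far[of j] s0[of "\<phi> j"] by (simp add: d_def field_simps)
    have enz: "e (\<phi> j) \<noteq> 0" for j using far'[of j] \<epsilon> s0[of "\<phi> j"]
      by (metis mult_pos_pos norm_zero not_le)
    define u where "u = (\<lambda>j. (1 / norm (e (\<phi> j))) *\<^sub>R e (\<phi> j))"
    have uS: "u j \<in> sphere 0 1" for j using enz[of j] by (simp add: u_def)
    obtain t \<psi> where tS: "t \<in> sphere (0::'a) 1" and \<psi>: "strict_mono (\<psi> :: nat \<Rightarrow> nat)" and ulim: "(u \<circ> \<psi>) \<longlonglongrightarrow> t"
      using seq_compactE[OF compact_imp_seq_compact[OF compact_sphere] ] uS by metis
    have "t \<in> Tan A a"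
      unfolding Tan_def
    proof (intro CollectI disjI2 exI conjI allI)
      let ?xs = "\<lambda>i. q (\<phi> (\<psi> i))"
      let ?rs = "\<lambda>i. 1 / norm (e (\<phi> (\<psi> i)))"
      fix i
      show "?xs i \<in> A" by (rule qA)
      show "?xs i \<noteq> a" using enz[of "\<psi> i"] by (simp add: e_def)
      show "?rs i > 0" using enz[of "\<psi> i"] by simp
    next
      show "(\<lambda>i. q (\<phi> (\<psi> i))) \<longlonglongrightarrow> a"
        using LIMSEQ_subseq_LIMSEQ[OF qlim strict_mono_o[OF \<phi> \<psi>]] by (simp add: comp_def)
      show "(\<lambda>i. (1 / norm (e (\<phi> (\<psi> i)))) *\<^sub>R (q (\<phi> (\<psi> i)) - a)) \<longlonglongrightarrow> t"
        using ulim by (simp add: comp_def u_def e_def)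
    qed
    hence t0: "inner m t \<le> 0" by (rule dual)
    have ub: "\<epsilon> / 2 \<le> inner m (u j)" for j
    proof -
      have ne: "norm (e (\<phi> j)) > 0" using enz[of j] by simp
      have "(norm (e (\<phi> j)))^2 \<le> 2 * s (\<phi> j) * inner m (e (\<phi> j))" by (rule Fc)
      hence "norm (e (\<phi> j)) / (2 * s (\<phi> j)) \<le> inner m (e (\<phi> j)) / norm (e (\<phi> j))"
        using ne s0[of "\<phi> j"] by (simp add: field_simps power2_eq_square)
      moreover have "\<epsilon> / 2 \<le> norm (e (\<phi> j)) / (2 * s (\<phi> j))"
        using far'[of j] s0[of "\<phi> j"] by (simp add: field_simps)
      moreover have "inner m (u j) = inner m (e (\<phi> j)) / norm (e (\<phi> j))" by (simp add: u_def)
      ultimately show ?thesis by linarith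
    qed
    have "\<epsilon> / 2 \<le> inner m t"
    proof (rule LIMSEQ_le_const)
      show "(\<lambda>j. inner m ((u \<circ> \<psi>) j)) \<longlonglongrightarrow> inner m t" by (intro tendsto_inner tendsto_const ulim)
      show "\<exists>N. \<forall>n\<ge>N. \<epsilon> / 2 \<le> inner m ((u \<circ> \<psi>) n)" using ub by simp
    qed
    thus False using t0 \<epsilon> by simp
  qed
  have ineq: "inner (w - q j) (m - d j) \<le> (norm (w - q j))^2 * norm (m - d j) / (2 * r)" for j
  proof -
    have h: "inner (w - q j) (x j - q j) \<le> (norm (w - q j))^2 * norm (x j - q j) / (2 * r)"
      by (rule normal_ineq[OF xU _ r w]) (simp add: q_def)
    have xqd: "x j - q j = s j *\<^sub>R (m - d j)" using s0[of j] by (simp add: xq d_def algebra_simps)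
    have "s j * inner (w - q j) (m - d j) \<le> s j * ((norm (w - q j))^2 * norm (m - d j) / (2 * r))"
      using h s0[of j] unfolding xqd by (simp add: mult_ac)
    thus ?thesis using s0[of j] by (rule mult_left_le_imp_le)
  qed
  have l1: "(\<lambda>j. inner (w - q j) (m - d j)) \<longlonglongrightarrow> inner (w - a) (m - 0)"
    by (intro tendsto_inner tendsto_diff tendsto_const qlim dlim)
  have l2: "(\<lambda>j. (norm (w - q j))^2 * norm (m - d j) / (2 * r)) \<longlonglongrightarrow> (norm (w - a))^2 * norm (m - 0) / (2 * r)"
    by (intro tendsto_divide tendsto_mult tendsto_power tendsto_norm tendsto_diff tendsto_const qlim dlim) (use r in auto)
  have "inner (w - a) (m - 0) \<le> (norm (w - a))^2 * norm (m - 0) / (2 * r)"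
    using LIMSEQ_le[OF l1 l2] ineq by blast
  thus ?thesis using m by simp
qed

lemma dual_normal:
  assumes aA: "a \<in> A" and dual: "\<And>t. t \<in> Tan A a \<Longrightarrow> inner n t \<le> 0"
    and r: "0 < r" "r < R" and w: "w \<in> A"
  shows "inner (w - a) n \<le> (norm (w - a))^2 * norm n / (2 * r)"
proof (cases "n = 0")
  case True thus ?thesis by simp
next
  case False
  define m where "m = (1 / norm n) *\<^sub>R n"
  have m: "norm m = 1" using False by (simp add: m_def)
  have "inner m t \<le> 0" if "t \<in> Tan A a" for t
    using dual[OF that] False by (simp add: m_def divide_nonpos_pos)
  hence h: "inner (w - a) m \<le> (norm (w - a))^2 / (2 * r)" by (rule dual_unit[OF aA m _ r w])
  have "inner (w - a) n = norm n * inner (w - a) m" using False by (simp add: m_def)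
  also have "\<dots> \<le> norm n * ((norm (w - a))^2 / (2 * r))" using h by (intro mult_left_mono) auto
  finally show ?thesis by (simp add: mult.commute)
qed


end


lemma coef_bound:
  fixes v :: "nat \<Rightarrow> 'a::euclidean_space"
  assumes p: "p = (\<Sum>l<k. c l *\<^sub>R v l)" and j: "j < k"
  shows "\<bar>c j\<bar> * infdist (v j) (span (v ` ({..<k} - {j}))) \<le> norm p"
proof (cases "c j = 0")
  case True thus ?thesis by simp
next
  case False
  define S where "S = span (v ` ({..<k} - {j}))"
  define y where "y = - (1 / c j) *\<^sub>R (\<Sum>l\<in>{..<k} - {j}. c l *\<^sub>R v l)"
  have yS: "y \<in> S" unfolding y_def S_def
    by (intro span_mul span_sum span_base) auto
  have ps: "p = c j *\<^sub>R v j + (\<Sum>l\<in>{..<k} - {j}. c l *\<^sub>R v l)"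
    using j p by (simp add: sum.remove)
  have "v j - y = (1 / c j) *\<^sub>R p" using False unfolding ps y_def by (simp add: algebra_simps)
  hence "infdist (v j) S \<le> norm p / \<bar>c j\<bar>" using infdist_le[OF yS, of "v j"] by (simp add: dist_norm)
  thus ?thesis using False by (simp add: S_def field_simps)
qed

lemma reach_R:
  fixes A :: "'a::euclidean_space set"
  assumes "ereal r < reach A"
  obtains R where "r < R" "\<And>a x. a \<in> A \<Longrightarrow> dist a x < R \<Longrightarrow> unique_nearest A x"
proof -
  obtain R where rR: "ereal r < ereal R" "ereal R < reach A" using ereal_dense2[OF assms(1)] by blast
  have "unique_nearest A x" if a: "a \<in> A" and d: "dist a x < R" for a x
  proof -
    have "ereal R < Sup {ereal s | s. s \<ge> 0 \<and> (\<forall>x\<in>ball a s. unique_nearest A x)}"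
      using less_INF_D[OF rR(2)[unfolded reach_def] a] .
    then obtain e where e: "e \<in> {ereal s | s. s \<ge> 0 \<and> (\<forall>x\<in>ball a s. unique_nearest A x)}" "ereal R < e"
      by (auto simp: less_Sup_iff)
    then obtain s where s: "e = ereal s" "\<forall>x\<in>ball a s. unique_nearest A x" by blast
    have "R < s" using e(2) s(1) by simp
    hence "x \<in> ball a s" using d by simp
    thus ?thesis using s(2) by blast
  qed
  thus ?thesis using that rR by auto
qed

lemma rho_le:
  assumes "\<exists>u\<in>U. norm u = 1" "\<exists>v\<in>V. norm v = 1"
    "\<And>u. u \<in> U \<Longrightarrow> norm u = 1 \<Longrightarrow> infdist u V \<le> M"
    "\<And>v. v \<in> V \<Longrightarrow> norm v = 1 \<Longrightarrow> infdist v U \<le> M"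
  shows "rho U V \<le> M"
  unfolding rho_def by (intro max.boundedI cSUP_least) (use assms in auto)

lemma transfer:
  fixes T P T' :: "'a::euclidean_space set"
  assumes sP: "subspace P" and h1: "\<And>t. t \<in> T \<Longrightarrow> infdist t P \<le> \<epsilon> * norm t"
    and h2: "\<And>p. p \<in> P \<Longrightarrow> infdist p T' \<le> \<epsilon> * norm p" and \<epsilon>: "0 \<le> \<epsilon>" and t: "t \<in> T"
  shows "infdist t T' \<le> 2 * \<epsilon> * norm t"
proof -
  obtain \<pi> where lin: "linear \<pi>" and inP: "\<And>x. \<pi> x \<in> P" and orth: "\<And>x w. w \<in> P \<Longrightarrow> inner (x - \<pi> x) w = 0"
    using proj_exists[OF sP] by blast
  define p where "p = \<pi> t"
  have d1: "infdist t P = norm (t - p)" unfolding p_def by (rule infdist_proj[OF sP inP orth])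
  have "(norm t)^2 = (norm p)^2 + (norm (t - p))^2"
    using norm_add_Pythagorean[of p "t - p"] orth[OF inP[of t], of t]
    by (simp add: Linear_Algebra.orthogonal_def inner_commute p_def)
  hence "(norm p)^2 \<le> (norm t)^2" by simp
  hence pt: "norm p \<le> norm t" using power2_le_imp_le[of "norm p" "norm t"] by simp
  have "infdist t T' \<le> infdist p T' + dist t p" by (rule infdist_triangle)
  also have "\<dots> \<le> \<epsilon> * norm p + \<epsilon> * norm t"
    using h2[OF inP[of t]] h1[OF t] d1 by (simp add: p_def dist_norm)
  also have "\<dots> \<le> \<epsilon> * norm t + \<epsilon> * norm t" using pt \<epsilon> by (simp add: mult_left_mono)
  finally show ?thesis by simp
qed

lemma dim_span_k:
  fixes v :: "nat \<Rightarrow> 'a::euclidean_space"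
  assumes h: "\<And>j. j < k \<Longrightarrow> infdist (v j) (span (v ` ({..<k} - {j}))) > 0"
  shows "dim (span (v ` {..<k})) = k"
proof -
  have inj: "inj_on v {..<k}"
  proof (rule inj_onI, rule ccontr)
    fix i j assume i: "i \<in> {..<k}" and j: "j \<in> {..<k}" and eq: "v i = v j" and ne: "i \<noteq> j"
    have "v i \<in> span (v ` ({..<k} - {i}))" using eq j ne by (intro span_base) auto
    hence "infdist (v i) (span (v ` ({..<k} - {i}))) = 0" by simp
    thus False using h[of i] i by simp
  qed
  have ind: "independent (v ` {..<k})"
    unfolding independent_explicit
  proof (intro conjI allI impI ballI)
    show "finite (v ` {..<k})" by simp
    fix c assume c0: "(\<Sum>x\<in>v ` {..<k}. c x *\<^sub>R x) = 0"
    fix x assume "x \<in> v ` {..<k}"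
    then obtain j where j: "j < k" and x: "x = v j" by blast
    have "0 = (\<Sum>l<k. c (v l) *\<^sub>R v l)" using c0 by (simp add: sum.reindex[OF inj])
    hence "\<bar>c (v j)\<bar> * infdist (v j) (span (v ` ({..<k} - {j}))) \<le> norm (0::'a)"
      by (intro coef_bound[OF _ j]) simp
    thus "c x = 0" using h[OF j] x by (simp add: mult_le_0_iff)
  qed
  have "dim (span (v ` {..<k})) = card (v ` {..<k})" using ind by (simp add: dim_eq_card_independent)
  thus ?thesis using inj by (simp add: card_image)
qed

lemma alt_bound:
  fixes v :: "nat \<Rightarrow> 'a::euclidean_space"
  assumes vD: "\<And>j. j < Suc m \<Longrightarrow> norm (v j) \<le> D" and D: "D > 0" and \<theta>: "\<theta> > 0"
    and G: "(fact (Suc m) * \<theta> * D^(Suc m))^2 \<le> gdet (Suc m) v" and j: "j < Suc m"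
  shows "fact (Suc m) * \<theta> * D \<le> infdist (v j) (span (v ` ({..<Suc m} - {j})))"
proof -
  define h where "h = infdist (v j) (span (v ` ({..<Suc m} - {j})))"
  have h0: "h \<ge> 0" by (simp add: h_def infdist_nonneg)
  have g1: "gdet (Suc m) v \<le> h^2 * (D^2)^m" unfolding h_def by (rule gram_alt[OF j vD])
  have e1: "h^2 * (D^2)^m = (h * D^m)^2"
    by (simp only: power_mult_distrib power_mult[symmetric] mult.commute[of m 2])
  have "(fact (Suc m) * \<theta> * D^(Suc m))^2 \<le> (h * D^m)^2"
    using order_trans[OF G g1] unfolding e1 .
  hence "fact (Suc m) * \<theta> * D^(Suc m) \<le> h * D^m" by (rule power2_le_imp_le) (use h0 D in auto)
  moreover have "fact (Suc m) * \<theta> * D^(Suc m) = (fact (Suc m) * \<theta> * D) * D^m" by simp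
  ultimately have "(fact (Suc m) * \<theta> * D) * D^m \<le> h * D^m" by simp
  hence "fact (Suc m) * \<theta> * D \<le> h" by (rule mult_right_le_imp_le) (use D in simp)
  thus ?thesis by (simp add: h_def)
qed

context prs begin

lemma side:
  fixes Q :: "nat \<Rightarrow> 'a" and m :: nat
  defines "k \<equiv> Suc m"
  defines "v \<equiv> (\<lambda>i. Q (Suc i) - Q 0)"
  assumes QA: "\<And>i. i \<le> k \<Longrightarrow> Q i \<in> A"
    and D: "D > 0" and QD: "\<And>i j. i \<le> k \<Longrightarrow> j \<le> k \<Longrightarrow> norm (Q i - Q j) \<le> D"
    and \<theta>: "\<theta> > 0" and G: "(fact k * \<theta> * D^k)^2 \<le> gdet k v"
    and r: "0 < r" "r < R"
    and p: "p \<in> span (v ` {..<k})"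
  shows "infdist p (Tan_span A (Q 0)) \<le> real k * D / (2 * r * fact k * \<theta>) * norm p"
proof -
  define T where "T = Tan_span A (Q 0)"
  have sT: "subspace T" by (simp add: T_def Tan_span_def)
  obtain \<pi> where lin: "linear \<pi>" and inT: "\<And>x. \<pi> x \<in> T" and orth: "\<And>x w. w \<in> T \<Longrightarrow> inner (x - \<pi> x) w = 0"
    using proj_exists[OF sT] by blast
  define z where "z = p - \<pi> p"
  have idist: "infdist p T = norm z" unfolding z_def by (rule infdist_proj[OF sT inT orth])
  have a0: "Q 0 \<in> A" using QA by simp
  have vD: "norm (v j) \<le> D" if "j < k" for j unfolding v_def using that by (intro QD) auto
  have hb: "fact k * \<theta> * D \<le> infdist (v j) (span (v ` ({..<k} - {j})))" if j: "j < k" for j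
    unfolding k_def by (rule alt_bound[OF _ D \<theta> G[unfolded k_def] j[unfolded k_def]]) (use vD in \<open>auto simp: k_def\<close>)
  show ?thesis
  proof (cases "z = 0")
    case True thus ?thesis using idist D \<theta> r by (simp add: T_def)
  next
    case False
    have zt: "inner z t = 0" if "t \<in> Tan A (Q 0)" for t
      using orth[of t p] that unfolding z_def T_def Tan_span_def by (simp add: span_base)
    have wz: "\<bar>inner (w - Q 0) z\<bar> \<le> (norm (w - Q 0))^2 * norm z / (2 * r)" if w: "w \<in> A" for w
    proof -
      have "inner (w - Q 0) z \<le> (norm (w - Q 0))^2 * norm z / (2 * r)"
        by (rule dual_normal[OF a0 _ r w]) (simp add: zt)
      moreover have "inner (w - Q 0) (- z) \<le> (norm (w - Q 0))^2 * norm (- z) / (2 * r)"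
        by (rule dual_normal[OF a0 _ r w]) (simp add: zt)
      ultimately show ?thesis by simp
    qed
    obtain c where c: "p = (\<Sum>l<k. c l *\<^sub>R v l)" using span_rep[OF _ p] by auto
    have zz: "(norm z)^2 = inner p z"
    proof -
      have "inner (\<pi> p) z = 0" using orth[OF inT[of p], of p] by (simp add: z_def inner_commute)
      thus ?thesis by (simp add: z_def power2_norm_eq_inner inner_diff_left)
    qed
    have fk: "fact k * \<theta> * D > 0" using D \<theta> by simp
    have trm: "\<bar>c l * inner (v l) z\<bar> \<le> (norm p / (fact k * \<theta> * D)) * (D^2 * norm z / (2 * r))" if l: "l < k" for l
    proof -
      have cb: "\<bar>c l\<bar> * (fact k * \<theta> * D) \<le> norm p"
        by (rule order_trans[OF mult_left_mono[OF hb[OF l] abs_ge_zero] coef_bound[OF c l]])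
      hence c1: "\<bar>c l\<bar> \<le> norm p / (fact k * \<theta> * D)" using fk by (simp add: field_simps)
      have "\<bar>inner (v l) z\<bar> \<le> (norm (v l))^2 * norm z / (2 * r)"
        unfolding v_def using wz[of "Q (Suc l)"] QA[of "Suc l"] l by (simp add: k_def)
      also have "\<dots> \<le> D^2 * norm z / (2 * r)"
        using vD[OF l] r by (intro divide_right_mono mult_right_mono power_mono) auto
      finally have c2: "\<bar>inner (v l) z\<bar> \<le> D^2 * norm z / (2 * r)" .
      show ?thesis unfolding abs_mult by (intro mult_mono c1 c2) (use fk in \<open>auto intro: divide_nonneg_pos\<close>)
    qed
    have "(norm z)^2 = (\<Sum>l<k. c l * inner (v l) z)" using zz c by (simp add: inner_sum_left)
    also have "\<dots> \<le> (\<Sum>l<k. \<bar>c l * inner (v l) z\<bar>)" by (intro sum_mono) auto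
    also have "\<dots> \<le> (\<Sum>l<k. (norm p / (fact k * \<theta> * D)) * (D^2 * norm z / (2 * r)))"
      by (intro sum_mono trm) auto
    also have "\<dots> = real k * ((norm p / (fact k * \<theta> * D)) * (D^2 * norm z / (2 * r)))"
      by simp
    also have "\<dots> = (real k * D / (2 * r * fact k * \<theta>) * norm p) * norm z"
      using D \<theta> r by (simp add: power2_eq_square divide_simps)
    finally have "norm z * norm z \<le> (real k * D / (2 * r * fact k * \<theta>) * norm p) * norm z"
      by (simp add: power2_eq_square)
    hence "norm z \<le> real k * D / (2 * r * fact k * \<theta>) * norm p" by (rule mult_right_le_imp_le) (use False in simp)
    thus ?thesis using idist by (simp add: T_def)
  qed
qed

end

theorem lemma3p8:
  fixes A :: "'a::euclidean_space set" and k :: nat and r \<theta> :: real and a b :: 'a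
  assumes "2 \<le> k" and "k < DIM('a)"
    and "0 < r" and "ereal r < reach A"
    and "\<theta> > 0"
    and "a \<in> T_k k A" and "b \<in> T_k k A"
    and "related A k \<theta> a b"
  shows "rho (psi k A a) (psi k A b) \<le> (real k / ((fact k * \<theta>)\<^sup>2 * r)) * norm (b - a)"
proof -
  obtain m where km: "k = Suc m" using assms(1) by (cases k) auto
  from assms(8) obtain z where ab: "a \<noteq> b" and zA: "\<forall>i\<in>{1..k-1}. z i \<in> A"
    and full: "\<theta> \<le> fullness k (verts a b z)" unfolding related_def by blast
  have aA: "a \<in> A" and bA: "b \<in> A" and dima: "dim (Tan_span A a) = k" and dimb: "dim (Tan_span A b) = k"
    using assms(6,7) by (auto simp: T_k_def)
  have r: "0 < r" by (rule assms(3))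
  have \<theta>: "\<theta> > 0" by (rule assms(5))
  obtain R where rR: "r < R" and unpR: "\<And>a x. a \<in> A \<Longrightarrow> dist a x < R \<Longrightarrow> unique_nearest A x"
    using reach_R[OF assms(4)] by blast
  interpret prs A R by unfold_locales (use rR r unpR in auto)
  define Q where "Q = verts a b z"
  define Q' where "Q' = verts b a z"
  have QA: "Q i \<in> A" if "i \<le> k" for i
  proof (cases "i = 0 \<or> i = 1")
    case True thus ?thesis using aA bA by (auto simp: Q_def verts_def)
  next
    case False
    hence "i - 1 \<in> {1..k-1}" using that by auto
    hence "z (i - 1) \<in> A" using zA by blast
    thus ?thesis using False by (auto simp: Q_def verts_def)
  qed
  have Q'A: "Q' i \<in> A" if "i \<le> k" for i
  proof (cases "i = 0 \<or> i = 1")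
    case True thus ?thesis using aA bA by (auto simp: Q'_def verts_def)
  next
    case False
    hence "i - 1 \<in> {1..k-1}" using that by auto
    hence "z (i - 1) \<in> A" using zA by blast
    thus ?thesis using False by (auto simp: Q'_def verts_def)
  qed
  have Q0: "Q 0 = a" "Q 1 = b" "Q' 0 = b" "Q' 1 = a" by (auto simp: Q_def Q'_def verts_def)
  define D where "D = diameter (simplex_set k Q)"
  have bdd: "bounded (simplex_set k Q)" unfolding simplex_set_def
    by (intro finite_imp_bounded_convex_hull) auto
  have Qin: "Q i \<in> simplex_set k Q" if "i \<le> k" for i
    unfolding simplex_set_def using that by (intro hull_inc) auto
  have QD: "norm (Q i - Q j) \<le> D" if "i \<le> k" "j \<le> k" for i j
    using diameter_bounded_bound[OF bdd Qin[OF that(1)] Qin[OF that(2)]] by (simp add: D_def dist_norm)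
  have Q'Q: "\<exists>i'\<le>k. Q' i = Q i'" if "i \<le> k" for i
  proof -
    consider "i = 0" | "i = 1" | "i \<ge> 2" by linarith
    thus ?thesis
    proof cases
      case 1 thus ?thesis by (intro exI[of _ 1]) (use km in \<open>auto simp: Q_def Q'_def verts_def\<close>)
    next
      case 2 thus ?thesis by (intro exI[of _ 0]) (auto simp: Q_def Q'_def verts_def)
    next
      case 3 thus ?thesis using that by (intro exI[of _ i]) (auto simp: Q_def Q'_def verts_def)
    qed
  qed
  have Q'D: "norm (Q' i - Q' j) \<le> D" if "i \<le> k" "j \<le> k" for i j
    using Q'Q[OF that(1)] Q'Q[OF that(2)] QD by auto
  have abD: "norm (b - a) \<le> D" using QD[of 1 0] km Q0 by simp
  have D: "D > 0" using abD ab by (metis norm_eq_zero eq_iff_diff_eq_0 order_less_le_trans zero_less_norm_iff)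
  define v where "v = (\<lambda>i. Q (Suc i) - Q 0)"
  define v' where "v' = (\<lambda>i. Q' (Suc i) - Q' 0)"
  have gv': "gdet k v' = gdet k v" unfolding v_def v'_def Q_def Q'_def by (rule gram_base)
  have vol: "simplex_vol k Q = sqrt (gdet k v) / fact k"
    unfolding simplex_vol_def v_def by (simp add: detk_gdet[of k "\<lambda>i. Q (Suc i) - Q 0", simplified])
  have g0: "0 \<le> gdet k v" using gram_hadamard by blast
  have G: "(fact k * \<theta> * D^k)^2 \<le> gdet k v"
  proof -
    have "\<theta> \<le> simplex_vol k Q / D^k" using full by (simp add: fullness_def Q_def D_def)
    hence "\<theta> * D^k \<le> simplex_vol k Q" using D by (simp add: field_simps)
    hence "fact k * \<theta> * D^k \<le> sqrt (gdet k v)" unfolding vol by (simp add: field_simps)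
    hence "(fact k * \<theta> * D^k)^2 \<le> (sqrt (gdet k v))^2"
      using \<theta> D by (intro power_mono) auto
    thus ?thesis using g0 by simp
  qed
  have G': "(fact k * \<theta> * D^k)^2 \<le> gdet k v'" using G gv' by simp
  have fD: "fact k * \<theta> * D \<le> norm (b - a)"
  proof -
    have "gdet k v \<le> (\<Prod>j<k. (norm (v j))^2)" using gram_hadamard by blast
    also have "\<dots> = (norm (v 0))^2 * (\<Prod>j<m. (norm (v (Suc j)))^2)"
      unfolding km by (rule prod.lessThan_Suc_shift)
    also have "\<dots> \<le> (norm (b - a))^2 * (\<Prod>j<m. D^2)"
    proof (intro mult_mono prod_mono conjI)
      show "(norm (v 0))^2 \<le> (norm (b - a))^2" using Q0 by (simp add: v_def km)
      fix j assume "j \<in> {..<m}"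
      thus "(norm (v (Suc j)))^2 \<le> D^2" unfolding v_def using QD[of "Suc (Suc j)" 0] km
        by (intro power_mono) auto
    qed (auto intro: prod_nonneg)
    also have "\<dots> = ((norm (b - a)) * D^m)^2" by (simp add: power_mult_distrib power_mult[symmetric] mult.commute[of 2 m])
    finally have "(fact k * \<theta> * D^k)^2 \<le> ((norm (b - a)) * D^m)^2" using G by linarith
    hence "fact k * \<theta> * D^k \<le> norm (b - a) * D^m" by (rule power2_le_imp_le) (use D in auto)
    hence "(fact k * \<theta> * D) * D^m \<le> norm (b - a) * D^m" by (simp add: km mult_ac)
    thus ?thesis using D by simp
  qed
  define \<epsilon> where "\<epsilon> = real k * norm (b - a) / (2 * r * (fact k * \<theta>)^2)"
  have \<epsilon>0: "0 \<le> \<epsilon>" using r by (simp add: \<epsilon>_def)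
  have kD: "real k * D / (2 * r * fact k * \<theta>) \<le> \<epsilon>"
  proof -
    have "D \<le> norm (b - a) / (fact k * \<theta>)" using fD \<theta> by (simp add: field_simps)
    hence "real k * D / (2 * r * fact k * \<theta>) \<le> real k * (norm (b - a) / (fact k * \<theta>)) / (2 * r * fact k * \<theta>)"
      using r \<theta> by (intro divide_right_mono mult_left_mono) auto
    also have "\<dots> = \<epsilon>" by (simp add: \<epsilon>_def power2_eq_square field_simps)
    finally show ?thesis .
  qed
  define P where "P = span (v ` {..<k})"
  have sP: "subspace P" by (simp add: P_def)
  have PP': "P \<subseteq> span (v' ` {..<k})"
    unfolding P_def
  proof (rule span_minimal)
    show "subspace (span (v' ` {..<k}))" by simp
    show "v ` {..<k} \<subseteq> span (v' ` {..<k})"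
    proof
      fix x assume "x \<in> v ` {..<k}"
      then obtain i where i: "i < k" and x: "x = v i" by blast
      have v0: "v' 0 \<in> span (v' ` {..<k})" using km by (intro span_base) auto
      have vi: "v' i \<in> span (v' ` {..<k})" using i by (intro span_base) auto
      show "x \<in> span (v' ` {..<k})"
      proof (cases "i = 0")
        case True
        have "x = - v' 0" using True x by (simp add: v_def v'_def Q_def Q'_def verts_def)
        thus ?thesis using v0 by (simp add: span_neg)
      next
        case False
        have "x = v' i - v' 0" using False x by (simp add: v_def v'_def Q_def Q'_def verts_def)
        thus ?thesis using v0 vi by (simp add: span_diff)
      qed
    qed
  qed
  have sideA: "infdist p (Tan_span A a) \<le> \<epsilon> * norm p" if p: "p \<in> P" for p
  proof -
    have "infdist p (Tan_span A (Q 0)) \<le> real k * D / (2 * r * fact k * \<theta>) * norm p"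
      using side[of m Q D \<theta> r p] QA QD D \<theta> G r rR p unfolding km v_def P_def by (simp add: km)
    also have "\<dots> \<le> \<epsilon> * norm p" using kD by (intro mult_right_mono) auto
    finally show ?thesis using Q0 by simp
  qed
  have sideB: "infdist p (Tan_span A b) \<le> \<epsilon> * norm p" if p: "p \<in> P" for p
  proof -
    have p': "p \<in> span (v' ` {..<k})" using PP' p by blast
    have "infdist p (Tan_span A (Q' 0)) \<le> real k * D / (2 * r * fact k * \<theta>) * norm p"
      using side[of m Q' D \<theta> r p] Q'A Q'D D \<theta> G' r rR p' unfolding km v'_def by (simp add: km)
    also have "\<dots> \<le> \<epsilon> * norm p" using kD by (intro mult_right_mono) auto
    finally show ?thesis using Q0 by simp
  qed
  have hpos: "infdist (v j) (span (v ` ({..<k} - {j}))) > 0" if "j < k" for j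
  proof -
    have "fact k * \<theta> * D \<le> infdist (v j) (span (v ` ({..<k} - {j})))"
      using alt_bound[of m v D \<theta> j] that QD D \<theta> G unfolding km v_def by (simp add: km)
    moreover have "fact k * \<theta> * D > 0" using D \<theta> by simp
    ultimately show ?thesis by linarith
  qed
  have dimP: "dim P = k" unfolding P_def by (rule dim_span_k[OF hpos])
  have sTa: "subspace (Tan_span A a)" and sTb: "subspace (Tan_span A b)" by (simp_all add: Tan_span_def)
  have unit: "\<exists>u\<in>T. norm u = 1" if "subspace T" "dim T = k" for T :: "'a set"
  proof -
    have "\<not> T \<subseteq> {0}" using that km dim_eq_0 by (metis nat.distinct(1))
    then obtain x where x: "x \<in> T" "x \<noteq> 0" by blast
    hence "(1 / norm x) *\<^sub>R x \<in> T" using that(1) by (simp add: subspace_mul)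
    thus ?thesis using x by (intro bexI[of _ "(1 / norm x) *\<^sub>R x"]) auto
  qed
  have ua: "\<exists>u\<in>Tan_span A a. norm u = 1" by (rule unit[OF sTa dima])
  have ub: "\<exists>u\<in>Tan_span A b. norm u = 1" by (rule unit[OF sTb dimb])
  have infd1: "infdist u V \<le> 1" if "norm u = 1" "subspace V" for u and V :: "'a set"
    using infdist_le[of 0 V u] that by (simp add: subspace_0)
  have goal: "rho (Tan_span A a) (Tan_span A b) \<le> 2 * \<epsilon>"
  proof (cases "\<epsilon> < 1 / 2")
    case False
    show ?thesis
    proof (rule rho_le[OF ua ub])
      fix u assume "u \<in> Tan_span A a" "norm u = 1"
      hence "infdist u (Tan_span A b) \<le> 1" using infd1[OF _ sTb] by blast
      thus "infdist u (Tan_span A b) \<le> 2 * \<epsilon>" using False by linarith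
    next
      fix u assume "u \<in> Tan_span A b" "norm u = 1"
      hence "infdist u (Tan_span A a) \<le> 1" using infd1[OF _ sTa] by blast
      thus "infdist u (Tan_span A a) \<le> 2 * \<epsilon>" using False by linarith
    qed
  next
    case True
    have ta: "infdist t P \<le> \<epsilon> * norm t" if "t \<in> Tan_span A a" for t
      by (rule sym_dist[OF sP sTa _ \<epsilon>0 _ sideA that]) (use dima dimP True in auto)
    have tb: "infdist t P \<le> \<epsilon> * norm t" if "t \<in> Tan_span A b" for t
      by (rule sym_dist[OF sP sTb _ \<epsilon>0 _ sideB that]) (use dimb dimP True in auto)
    show ?thesis
    proof (rule rho_le[OF ua ub])
      fix u assume "u \<in> Tan_span A a" "norm u = 1"
      thus "infdist u (Tan_span A b) \<le> 2 * \<epsilon>" using transfer[OF sP ta sideB \<epsilon>0] by fastforce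
    next
      fix u assume "u \<in> Tan_span A b" "norm u = 1"
      thus "infdist u (Tan_span A a) \<le> 2 * \<epsilon>" using transfer[OF sP tb sideA \<epsilon>0] by fastforce
    qed
  qed
  have "2 * \<epsilon> = (real k / ((fact k * \<theta>)\<^sup>2 * r)) * norm (b - a)"
    using r by (simp add: \<epsilon>_def field_simps)
  thus ?thesis using goal by (simp add: psi_def)
qed

end
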